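(* Let $\kappa=1$ and, for $\sigma\in[0,1]$ and $h>0$, define $$f(\sigma,h^{-1})=-\tfrac14\pi+\Im\log\Gamma\big(\tfrac34-\tfrac12\sigma+\tfrac12 i\kappa h^{-1}\big)-\Im\log\Gamma\big(\tfrac14-\tfrac12\sigma+\tfrac12 i\kappa h^{-1}\big).$$ Then for all $0<h^{-1}<\infty$ we have $-\frac\pi2<f(0,h^{-1})<0$ and $0<f(1,h^{-1})<\pi$, and $\partial_\sigma f(\sigma,h^{-1})>0$ for all $0<\sigma<1$ and $0<h^{-1}<\infty$. Hence for each $0<h^{-1}<\infty$ there exists a unique $\sigma(h)\in(0,1)$ such that $f(\sigma(h),h^{-1})=0$, and there are no solutions $\sigma\in(0,1)$ of $f(\sigma,h^{-1})=2\pi n$ for integers $n\neq0$.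
   Context: $\log\Gamma$ denotes the branch of the logarithm of the Gamma function which is analytic on $\mathbb{C}\setminus(-\infty,0]$ and satisfies $\log\Gamma(1)=0$. (This $f$ equals $\Im\log A(\lambda)$ for $A(\lambda)=e^{-i\pi/4}\sqrt2\,\Gamma(\frac34-\frac12 i\lambda)/\Gamma(\frac14-\frac12 i\lambda)$, $\lambda=-\kappa h^{-1}-i\sigma$, with this choice of branch.) *)

theory Defs
  imports "HOL-Analysis.Analysis"
begin

text \<open>kappa = 1; t stands for h^{-1}. ln_Gamma on complex is the principal branch of
  log Gamma, analytic off the non-positive reals, with ln_Gamma 1 = 0.\<close>
definition kappa :: real where "kappa = 1"

definition fgam :: "real \<Rightarrow> real \<Rightarrow> real" where
  "fgam \<sigma> t = - pi / 4
     + Im (ln_Gamma (Complex (3/4 - \<sigma>/2) (kappa * t / 2)))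
     - Im (ln_Gamma (Complex (1/4 - \<sigma>/2) (kappa * t / 2)))"

end

theory Submission
  imports Defs
begin



lemma Im_Digamma_diff:
  fixes b y :: real
  assumes b: "-1/4 < b" and y: "y > 0"
  shows "Im (Digamma (Complex (b+1/2) y)) < Im (Digamma (Complex b y))"
proof -
  define A where "A = Complex (b+1/2) y"
  define B where "B = Complex b y"
  have A0: "A \<noteq> 0" and B0: "B \<noteq> 0" using y by (auto simp: A_def B_def complex_eq_iff)
  have sA: "(\<lambda>k. inverse (of_nat (Suc k)) - inverse (A + of_nat k)) sums (Digamma A + euler_mascheroni)"
    using summable_sums[OF summable_Digamma[OF A0]] by (simp add: Digamma_def)
  have sB: "(\<lambda>k. inverse (of_nat (Suc k)) - inverse (B + of_nat k)) sums (Digamma B + euler_mascheroni)"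
    using summable_sums[OF summable_Digamma[OF B0]] by (simp add: Digamma_def)
  have s: "(\<lambda>k. Im ((inverse (of_nat (Suc k)) - inverse (B + of_nat k)) - (inverse (of_nat (Suc k)) - inverse (A + of_nat k))))
      sums Im ((Digamma B + euler_mascheroni) - (Digamma A + euler_mascheroni))"
    by (rule sums_Im[OF sums_diff[OF sB sA]])
  have pos: "0 < Im ((inverse (of_nat (Suc k)) - inverse (B + of_nat k)) - (inverse (of_nat (Suc k)) - inverse (A + of_nat k)))" for k
  proof -
    have e: "Im ((inverse (of_nat (Suc k)) - inverse (B + of_nat k)) - (inverse (of_nat (Suc k)) - inverse (A + of_nat k)))
        = y / ((b + k)^2 + y^2) - y / ((b + 1/2 + k)^2 + y^2)"
      by (simp add: A_def B_def Im_divide power2_eq_square)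
    have "(b + k)^2 < (b + 1/2 + k)^2" using b by (simp add: power2_eq_square algebra_simps)
    hence "y / ((b + 1/2 + k)^2 + y^2) < y / ((b + k)^2 + y^2)"
      using y by (intro divide_strict_left_mono) (auto intro!: add_nonneg_pos mult_pos_pos)
    thus ?thesis using e by simp
  qed
  have "0 < Im ((Digamma B + euler_mascheroni) - (Digamma A + euler_mascheroni))"
    using sums_unique[OF s] suminf_pos[OF sums_summable[OF s] pos] by simp
  thus ?thesis by (simp add: A_def B_def)
qed



lemma Im_ln_term:
  fixes z :: complex
  assumes "Im z \<noteq> 0" "k > 0"
  shows "Im (ln (z / of_nat k + 1)) = Im (Ln (z + of_nat k))"
proof -
  have "z / of_nat k + 1 = (z + of_nat k) / of_real (real k)" using assms by (simp add: field_simps)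
  moreover have "z + of_nat k \<noteq> 0" using assms by (auto simp: complex_eq_iff)
  moreover have "Ln ((z + of_nat k) / of_real (real k)) = Ln (z + of_nat k) - of_real (ln (real k))"
    using Ln_divide_of_real[of "real k" "z + of_nat k"] assms \<open>z + of_nat k \<noteq> 0\<close> by simp
  ultimately show ?thesis by simp
qed

lemma Im_ln_Gamma_plus1:
  fixes z :: complex
  assumes z: "Im z \<noteq> 0"
  shows "Im (ln_Gamma (z + 1)) = Im (ln_Gamma z) + Im (Ln z)"
proof -
  have nI: "w \<notin> \<int>\<^sub>\<le>\<^sub>0" if "Im w \<noteq> 0" for w :: complex
    using that by (auto elim!: nonpos_Ints_cases)
  have z1: "Im (z + 1) \<noteq> 0" using z by simp
  define a where "a k = Im (Ln (z + of_nat k))" for k :: nat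
  have key: "Im (ln_Gamma_series (z + 1) n) = Im (ln_Gamma_series z n) + Im (Ln z) - a (Suc n)"
    if n: "n > 0" for n
  proof -
    have r: "Im (w * ln (of_nat n)) = Im w * ln (real n)" for w :: complex
      using n by simp
    have s1: "(\<Sum>k=1..n. Im (ln ((z+1) / of_nat k + 1))) = (\<Sum>k=1..n. a (Suc k))"
      by (intro sum.cong refl) (use z1 Im_ln_term[of "z+1"] in \<open>auto simp: a_def add_ac\<close>)
    have s2: "(\<Sum>k=1..n. Im (ln (z / of_nat k + 1))) = (\<Sum>k=1..n. a k)"
      by (intro sum.cong refl) (use z in \<open>auto simp: a_def Im_ln_term\<close>)
    have tel: "(\<Sum>k=1..n. a (Suc k)) - (\<Sum>k=1..n. a k) = a (Suc n) - a 1"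
      using sum_Suc_diff[of 1 n a] n by (simp add: sum_subtractf)
    have a1: "a 1 = Im (Ln (z + 1))" by (simp add: a_def)
    show ?thesis
      unfolding ln_Gamma_series_def minus_complex.sel r Im_sum s1 s2
      using tel a1 by (simp add: algebra_simps)
  qed
  have lim: "(\<lambda>n. a (Suc n)) \<longlonglongrightarrow> 0"
  proof -
    have ev: "eventually (\<lambda>n. arctan (Im z / (Re z + real (Suc n))) = a (Suc n)) sequentially"
    proof -
      obtain N :: nat where N: "real N > - Re z" using reals_Archimedean2 by blast
      show ?thesis
      proof (rule eventually_sequentiallyI[of N])
        fix n assume "n \<ge> N"
        hence "Re (z + of_nat (Suc n)) > 0" using N by simp
        moreover have "z + of_nat (Suc n) \<noteq> 0" using z by (auto simp: complex_eq_iff)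
        ultimately show "arctan (Im z / (Re z + real (Suc n))) = a (Suc n)"
          by (simp add: a_def Im_Ln_eq)
      qed
    qed
    have ft: "filterlim (\<lambda>n. Re z + real (Suc n)) at_top sequentially"
      by (intro filterlim_tendsto_add_at_top[OF tendsto_const]
                filterlim_compose[OF filterlim_real_sequentially filterlim_Suc])
    have "(\<lambda>n. arctan (Im z / (Re z + real (Suc n)))) \<longlonglongrightarrow> arctan 0"
      by (intro tendsto_intros tendsto_divide_0[OF tendsto_const] filterlim_at_top_imp_at_infinity ft)
    thus ?thesis using ev by (simp add: Lim_transform_eventually)
  qed
  have L1: "(\<lambda>n. Im (ln_Gamma_series (z+1) n)) \<longlonglongrightarrow> Im (ln_Gamma (z+1))"
    by (intro tendsto_Im ln_Gamma_complex_LIMSEQ nI z1)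
  have L2: "(\<lambda>n. Im (ln_Gamma_series z n) + Im (Ln z) - a (Suc n)) \<longlonglongrightarrow> Im (ln_Gamma z) + Im (Ln z) - 0"
    by (intro tendsto_intros tendsto_Im ln_Gamma_complex_LIMSEQ nI z lim)
  have ev2: "eventually (\<lambda>n. Im (ln_Gamma_series z n) + Im (Ln z) - a (Suc n) = Im (ln_Gamma_series (z+1) n)) sequentially"
    using eventually_gt_at_top[of "0::nat"] by eventually_elim (simp add: key)
  have "(\<lambda>n. Im (ln_Gamma_series (z+1) n)) \<longlonglongrightarrow> Im (ln_Gamma z) + Im (Ln z) - 0"
    using Lim_transform_eventually[OF L2 ev2] .
  with L1 show ?thesis using LIMSEQ_unique by force
qed



lemma D0_arg:
  fixes y :: real
  shows "\<exists>n::int. \<bar>Im (ln_Gamma (Complex (3/4) y)) - Im (ln_Gamma (Complex (1/4) y)) - 2*pi* of_int n\<bar> < pi/4"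
proof -
  define a where "a = Complex (3/4) y"
  define b where "b = Complex (1/4) y"
  have nI: "w \<notin> \<int>\<^sub>\<le>\<^sub>0" if "Re w > 0" for w :: complex
    using that by (auto elim!: nonpos_Ints_cases)
  have ea: "exp (ln_Gamma a) = Gamma a" using nI[of a] by (simp add: Gamma_complex_altdef a_def)
  have eb: "exp (ln_Gamma b) = Gamma b" using nI[of b] by (simp add: Gamma_complex_altdef b_def)
  have Ga: "Gamma a \<noteq> 0" using nI[of a] by (simp add: Gamma_eq_zero_iff a_def)
  have Gb: "Gamma b \<noteq> 0" using nI[of b] by (simp add: Gamma_eq_zero_iff b_def)
  have cb: "1 - b = cnj a" by (simp add: a_def b_def complex_eq_iff)
  define s where "s = sin (of_real pi * b)"
  have refl: "Gamma b * cnj (Gamma a) = of_real pi / s"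
    using Gamma_reflection_complex[of b] cb by (simp add: cnj_Gamma s_def)
  have s0: "s \<noteq> 0" using refl Ga Gb by auto
  define c where "c = (cmod (Gamma a))^2 / pi"
  have c0: "c > 0" using Ga by (simp add: c_def)
  define w where "w = Gamma a / Gamma b"
  have wcs: "w = of_real c * s"
  proof -
    have "Gamma b = of_real pi / (s * cnj (Gamma a))" using refl Ga s0
      by (simp add: field_simps)
    hence "w = Gamma a * cnj (Gamma a) * s / of_real pi" using Ga Gb s0 by (simp add: w_def field_simps)
    also have "Gamma a * cnj (Gamma a) = of_real ((cmod (Gamma a))^2)"
      by (simp add: complex_mult_cnj cmod_power2)
    finally show ?thesis by (simp add: c_def field_simps)
  qed
  have w0: "w \<noteq> 0" using Ga Gb by (simp add: w_def)
  have "exp (ln_Gamma a - ln_Gamma b) = exp (Ln w)"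
    using ea eb w0 by (simp add: exp_diff w_def)
  then obtain n :: int where n: "ln_Gamma a - ln_Gamma b = Ln w + (of_int (2 * n) * pi) * \<i>"
    unfolding exp_eq by blast
  have D: "Im (ln_Gamma a) - Im (ln_Gamma b) - 2*pi* of_int n = Im (Ln s)"
  proof -
    have "Im (ln_Gamma a) - Im (ln_Gamma b) = Im (Ln w) + 2 * pi * of_int n"
      using arg_cong[OF n, of Im] by simp
    moreover have "Ln w = of_real (ln c) + Ln s" using wcs c0 s0 by (simp add: Ln_times_of_real Ln_of_real)
    ultimately show ?thesis by simp
  qed
  define Y where "Y = pi * y"
  have Res: "Re s = sqrt 2 / 2 * ((exp Y + exp (- Y)) / 2)"
    by (simp add: s_def Re_sin b_def Y_def sin_45)
  have Ims: "Im s = sqrt 2 / 2 * ((exp Y - exp (- Y)) / 2)"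
    by (simp add: s_def Im_sin b_def Y_def cos_45)
  have pos: "Re s > 0" unfolding Res by (intro mult_pos_pos) (auto intro: add_pos_pos)
  have q: "Im s / Re s = (exp Y - exp (- Y)) / (exp Y + exp (- Y))"
  proof -
    have "Im s / Re s = (sqrt 2 / 4 * (exp Y - exp (- Y))) / (sqrt 2 / 4 * (exp Y + exp (- Y)))"
      unfolding Res Ims by simp
    also have "\<dots> = (exp Y - exp (- Y)) / (exp Y + exp (- Y))"
      by (rule mult_divide_mult_cancel_left) simp
    finally show ?thesis .
  qed
  have "\<bar>(exp Y - exp (- Y)) / (exp Y + exp (- Y))\<bar> < 1"
  proof -
    have p1: "exp Y > 0" "exp (-Y) > 0" by auto
    hence "\<bar>exp Y - exp (- Y)\<bar> < exp Y + exp (- Y)" by linarith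
    thus ?thesis using p1 by (simp add: abs_divide)
  qed
  hence "\<bar>arctan (Im s / Re s)\<bar> < pi/4" unfolding q
  proof -
    fix x :: real assume "\<bar>x\<bar> < 1"
    hence "x < 1" "-1 < x" by auto
    from arctan_less_pi4_pos[OF this(1)] arctan_less_pi4_neg[OF this(2)]
    show "\<bar>arctan x\<bar> < pi/4" by linarith
  qed
  moreover have "Im (Ln s) = arctan (Im s / Re s)" using s0 pos by (simp add: Im_Ln_eq)
  ultimately have "\<bar>Im (ln_Gamma a) - Im (ln_Gamma b) - 2*pi * of_int n\<bar> < pi/4" using D by simp
  thus ?thesis unfolding a_def b_def by blast
qed


lemma notin_nonpos_Reals: "Re w > 0 \<or> Im w \<noteq> 0 \<Longrightarrow> w \<notin> \<real>\<^sub>\<le>\<^sub>0"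
  by (auto simp: complex_nonpos_Reals_iff)

lemma isCont_ImlnG:
  fixes c :: real
  assumes "c > 0 \<or> y \<noteq> 0"
  shows "isCont (\<lambda>y. Im (ln_Gamma (Complex c y))) y"
proof -
  have "isCont (\<lambda>y. ln_Gamma (of_real c + \<i> * of_real y)) y"
    by (rule isCont_ln_Gamma_complex) (use assms in \<open>auto intro!: continuous_intros simp: complex_nonpos_Reals_iff\<close>)
  thus ?thesis unfolding Complex_eq by (rule isCont_Im)
qed

definition D0 :: "real \<Rightarrow> real" where
  "D0 y = Im (ln_Gamma (Complex (3/4) y)) - Im (ln_Gamma (Complex (1/4) y))"

lemma D0_cont: "continuous_on A D0"
  unfolding D0_def by (intro continuous_at_imp_continuous_on ballI continuous_intros isCont_ImlnG) auto

lemma D0_zero: "D0 0 = 0"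
proof -
  have e: "Complex (3/4) 0 = of_real (3/4)" "Complex (1/4) 0 = of_real (1/4)" by (simp_all add: complex_eq_iff)
  have "D0 0 = Im (ln_Gamma (of_real (3/4))) - Im (ln_Gamma (of_real (1/4)))"
    unfolding D0_def e by (rule refl)
  also have "\<dots> = 0" by (simp only: ln_Gamma_complex_of_real Im_complex_of_real)
  finally show ?thesis .
qed

lemma not_pi_mod: "\<not> \<bar>pi - 2*pi * of_int (m::int)\<bar> < pi/4" "\<not> \<bar>- pi - 2*pi * of_int (m::int)\<bar> < pi/4"
proof -
  have i1: "\<bar>1 - 2*m\<bar> \<ge> 1" "\<bar>1 + 2*m\<bar> \<ge> 1" by presburger+
  have "\<bar>pi - 2*pi * of_int m\<bar> = \<bar>pi * (1 - 2 * of_int m)\<bar>" by (simp add: algebra_simps)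
  also have "\<dots> = pi * of_int \<bar>1 - 2*m\<bar>" by (simp add: abs_mult)
  also have "\<dots> \<ge> pi * 1" proof (intro mult_left_mono)
    show "1 \<le> real_of_int \<bar>1 - 2*m\<bar>" using i1 by linarith
  qed simp
  finally show "\<not> \<bar>pi - 2*pi * of_int (m::int)\<bar> < pi/4" using pi_gt_zero by linarith
  have "\<bar>- pi - 2*pi * of_int m\<bar> = \<bar>pi * (1 + 2 * of_int m)\<bar>" by (simp add: algebra_simps)
  also have "\<dots> = pi * of_int \<bar>1 + 2*m\<bar>" by (simp add: abs_mult)
  also have "\<dots> \<ge> pi * 1" proof (intro mult_left_mono)
    show "1 \<le> real_of_int \<bar>1 + 2*m\<bar>" using i1 by linarith
  qed simp
  finally show "\<not> \<bar>- pi - 2*pi * of_int (m::int)\<bar> < pi/4" using pi_gt_zero by linarith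
qed

lemma D0_bound:
  assumes y: "y \<ge> 0"
  shows "\<bar>D0 y\<bar> < pi/4"
proof (rule ccontr)
  assume H: "\<not> \<bar>D0 y\<bar> < pi/4"
  obtain n :: int where n: "\<bar>D0 y - 2*pi * of_int n\<bar> < pi/4" using D0_arg[of y] unfolding D0_def by blast
  have "n \<noteq> 0" using H n by auto
  hence "n \<ge> 1 \<or> n \<le> -1" by linarith
  thus False
  proof
    assume "n \<ge> 1"
    hence "2*pi * of_int n \<ge> 2*pi * 1" using pi_gt_zero by (intro mult_left_mono) auto
    hence "D0 y \<ge> pi" using n pi_gt_zero by linarith
    then obtain y' where "D0 y' = pi"
      using IVT'[of D0 0 pi y] D0_zero y D0_cont pi_gt_zero by auto
    moreover obtain m :: int where "\<bar>D0 y' - 2*pi * of_int m\<bar> < pi/4" using D0_arg[of y'] unfolding D0_def by blast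
    ultimately have "\<bar>pi - 2*pi * of_int m\<bar> < pi/4" by simp
    with not_pi_mod(1) show False by blast
  next
    assume "n \<le> -1"
    hence "2*pi * of_int n \<le> 2*pi * (-1)" using pi_gt_zero by (intro mult_left_mono) auto
    hence "D0 y \<le> - pi" using n pi_gt_zero by linarith
    then obtain y' where "D0 y' = - pi"
      using IVT2'[of D0 y "-pi" 0] D0_zero y D0_cont pi_gt_zero by auto
    moreover obtain m :: int where "\<bar>D0 y' - 2*pi * of_int m\<bar> < pi/4" using D0_arg[of y'] unfolding D0_def by blast
    ultimately have "\<bar>- pi - 2*pi * of_int m\<bar> < pi/4" by simp
    with not_pi_mod(2) show False by blast
  qed
qed


lemma deriv_Im_lnG:
  fixes c y \<sigma> :: real
  assumes y: "y \<noteq> 0"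
  shows "((\<lambda>s. Im (ln_Gamma (Complex (c - s/2) y))) has_real_derivative
            (- Im (Digamma (Complex (c - \<sigma>/2) y)) / 2)) (at \<sigma>)"
proof -
  define f where "f s = Complex (c - s/2) y" for s :: real
  have f_eq: "f = (\<lambda>s. of_real (c - s/2) + \<i> * of_real y)" by (simp add: f_def fun_eq_iff Complex_eq)
  have df: "(f has_vector_derivative (of_real (-1/2))) (at \<sigma>)"
  proof -
    have "((\<lambda>s. c - s/2) has_real_derivative (-1/2)) (at \<sigma>)" by (auto intro!: derivative_eq_intros)
    from has_vector_derivative_of_real[OF this]
    have "((\<lambda>s. of_real (c - s/2) :: complex) has_vector_derivative of_real (-1/2)) (at \<sigma>)" .
    from has_vector_derivative_add[OF this has_vector_derivative_const[of "\<i> * of_real y"]]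
    show ?thesis unfolding f_eq by simp
  qed
  have dg: "(ln_Gamma has_field_derivative Digamma (f \<sigma>)) (at (f \<sigma>))"
    by (rule has_field_derivative_ln_Gamma_complex) (use y in \<open>simp add: f_def complex_nonpos_Reals_iff\<close>)
  have "((ln_Gamma \<circ> f) has_vector_derivative (of_real (-1/2) * Digamma (f \<sigma>))) (at \<sigma>)"
    by (rule field_vector_diff_chain_at[OF df dg])
  hence "((\<lambda>s. Im ((ln_Gamma \<circ> f) s)) has_vector_derivative Im (of_real (-1/2) * Digamma (f \<sigma>))) (at \<sigma>)"
    by (rule bounded_linear.has_vector_derivative[OF bounded_linear_Im])
  hence "((\<lambda>s. Im ((ln_Gamma \<circ> f) s)) has_real_derivative Im (of_real (-1/2) * Digamma (f \<sigma>))) (at \<sigma>)"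
    by (simp add: has_real_derivative_iff_has_vector_derivative)
  thus ?thesis by (simp add: f_def o_def)
qed

lemma fgam_eq: "fgam s t = - pi/4 + Im (ln_Gamma (Complex (3/4 - s/2) (t/2))) - Im (ln_Gamma (Complex (1/4 - s/2) (t/2)))"
  by (simp add: fgam_def kappa_def)

lemma fgam_deriv:
  assumes t: "t > 0"
  shows "((\<lambda>s. fgam s t) has_real_derivative
     (- Im (Digamma (Complex (3/4 - \<sigma>/2) (t/2))) / 2 + Im (Digamma (Complex (1/4 - \<sigma>/2) (t/2))) / 2)) (at \<sigma>)"
proof -
  have y: "t/2 \<noteq> 0" using t by simp
  have "((\<lambda>s. - pi/4 + Im (ln_Gamma (Complex (3/4 - s/2) (t/2))) - Im (ln_Gamma (Complex (1/4 - s/2) (t/2))))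
     has_real_derivative (0 + (- Im (Digamma (Complex (3/4 - \<sigma>/2) (t/2))) / 2) - (- Im (Digamma (Complex (1/4 - \<sigma>/2) (t/2))) / 2))) (at \<sigma>)"
    by (intro DERIV_diff DERIV_add DERIV_const deriv_Im_lnG y)
  thus ?thesis by (simp add: fgam_eq)
qed

lemma fgam_deriv_pos:
  assumes t: "t > 0" and s: "\<sigma> < 1"
  shows "- Im (Digamma (Complex (3/4 - \<sigma>/2) (t/2))) / 2 + Im (Digamma (Complex (1/4 - \<sigma>/2) (t/2))) / 2 > 0"
proof -
  have "Im (Digamma (Complex ((1/4 - \<sigma>/2) + 1/2) (t/2))) < Im (Digamma (Complex (1/4 - \<sigma>/2) (t/2)))"
    by (rule Im_Digamma_diff) (use t s in auto)
  moreover have "(1/4 - \<sigma>/2) + 1/2 = 3/4 - \<sigma>/2" by simp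
  ultimately show ?thesis by simp
qed

lemma fgam_cont: "t > 0 \<Longrightarrow> continuous_on A (\<lambda>s. fgam s t)"
  by (intro continuous_at_imp_continuous_on ballI DERIV_isCont[OF fgam_deriv])

lemma fgam_mono:
  assumes t: "t > 0" and ab: "0 \<le> a" "a < b" "b \<le> 1"
  shows "fgam a t < fgam b t"
proof (rule DERIV_pos_imp_increasing_open[OF ab(2)])
  fix x assume "a < x" "x < b"
  thus "\<exists>y. ((\<lambda>s. fgam s t) has_real_derivative y) (at x) \<and> 0 < y"
    using fgam_deriv[OF t] fgam_deriv_pos[OF t] ab by force
qed (rule fgam_cont[OF t])

lemma fgam0_bound:
  assumes t: "t > 0"
  shows "- (pi/2) < fgam 0 t \<and> fgam 0 t < 0"
proof -
  have "fgam 0 t = - pi/4 + D0 (t/2)" by (simp add: fgam_eq D0_def)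
  moreover have "\<bar>D0 (t/2)\<bar> < pi/4" using D0_bound[of "t/2"] t by simp
  hence "- (pi/4) < D0 (t/2) \<and> D0 (t/2) < pi/4" by linarith
  ultimately show ?thesis by linarith
qed

lemma fgam1_bound:
  assumes t: "t > 0"
  shows "0 < fgam 1 t \<and> fgam 1 t < pi"
proof -
  define z where "z = Complex (-1/4) (t/2)"
  have z1: "z + 1 = Complex (3/4) (t/2)" by (simp add: z_def complex_eq_iff)
  have rec: "Im (ln_Gamma (Complex (3/4) (t/2))) = Im (ln_Gamma z) + Im (Ln z)"
    using Im_ln_Gamma_plus1[of z] t z1 by (simp add: z_def)
  have "fgam 1 t = - pi/4 + Im (ln_Gamma (Complex (1/4) (t/2))) - Im (ln_Gamma z)"
    by (simp add: fgam_eq z_def)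
  hence e: "fgam 1 t = - pi/4 - D0 (t/2) + Im (Ln z)" using rec by (simp add: D0_def)
  have D: "\<bar>D0 (t/2)\<bar> < pi/4" using D0_bound[of "t/2"] t by simp
  have z0: "z \<noteq> 0" by (simp add: z_def complex_eq_iff)
  have "Im (Ln z) = arctan (Im z / Re z) + pi" using z0 t by (subst Im_Ln_eq) (auto simp: z_def)
  moreover have "arctan (Im z / Re z) > - (pi/2)" using arctan_bounded by blast
  ultimately have l: "Im (Ln z) > pi/2" by linarith
  have u: "Im (Ln z) < pi" using Im_Ln_pos_lt_imp[of z] t by (simp add: z_def)
  have "- (pi/4) < D0 (t/2) \<and> D0 (t/2) < pi/4" using D by linarith
  thus ?thesis using e l u by linarith
qed

theorem lemma5p1:
  shows "(\<forall>t::real. t > 0 \<longrightarrow> - (pi/2) < fgam 0 t \<and> fgam 0 t < 0)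
       \<and> (\<forall>t::real. t > 0 \<longrightarrow> 0 < fgam 1 t \<and> fgam 1 t < pi)
       \<and> (\<forall>\<sigma> t::real. 0 < \<sigma> \<and> \<sigma> < 1 \<and> t > 0 \<longrightarrow>
            (\<exists>D. ((\<lambda>s. fgam s t) has_real_derivative D) (at \<sigma>) \<and> D > 0))
       \<and> (\<forall>t::real. t > 0 \<longrightarrow> (\<exists>!\<sigma>. \<sigma> \<in> {0<..<1} \<and> fgam \<sigma> t = 0))
       \<and> (\<forall>t::real. t > 0 \<longrightarrow> (\<forall>n::int. n \<noteq> 0 \<longrightarrow>
            \<not> (\<exists>\<sigma>. \<sigma> \<in> {0<..<1} \<and> fgam \<sigma> t = 2 * pi * of_int n)))"
proof (intro conjI allI impI)
  fix t :: real assume t: "t > 0"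
  show "- (pi/2) < fgam 0 t" "fgam 0 t < 0" using fgam0_bound[OF t] pi_gt_zero by linarith+
next
  fix t :: real assume t: "t > 0"
  show "0 < fgam 1 t" "fgam 1 t < pi" using fgam1_bound[OF t] by linarith+
next
  fix \<sigma> t :: real assume a: "0 < \<sigma> \<and> \<sigma> < 1 \<and> t > 0"
  thus "\<exists>D. ((\<lambda>s. fgam s t) has_real_derivative D) (at \<sigma>) \<and> D > 0"
    using fgam_deriv fgam_deriv_pos by blast
next
  fix t :: real assume t: "t > 0"
  have f0: "fgam 0 t < 0" and f1: "fgam 1 t > 0" using fgam0_bound[OF t] fgam1_bound[OF t] by auto
  obtain x where x: "0 \<le> x" "x \<le> 1" "fgam x t = 0"
    using IVT'[of "\<lambda>s. fgam s t" 0 0 1] f0 f1 fgam_cont[OF t] by auto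
  have "x \<noteq> 0" "x \<noteq> 1" using x f0 f1 by auto
  hence xin: "x \<in> {0<..<1}" using x by auto
  show "\<exists>!\<sigma>. \<sigma> \<in> {0<..<1} \<and> fgam \<sigma> t = 0"
  proof (rule ex1I[of _ x])
    show "x \<in> {0<..<1} \<and> fgam x t = 0" using xin x by simp
  next
    fix u assume u: "u \<in> {0<..<1} \<and> fgam u t = 0"
    show "u = x"
    proof (rule ccontr)
      assume "u \<noteq> x"
      hence "u < x \<or> x < u" by linarith
      thus False
      proof
        assume "u < x" thus False using fgam_mono[OF t, of u x] u x xin by auto
      next
        assume "x < u" thus False using fgam_mono[OF t, of x u] u x xin by auto
      qed
    qed
  qed
next
  fix t :: real and n :: int assume t: "t > 0" and n: "n \<noteq> 0"
  show "\<not> (\<exists>\<sigma>. \<sigma> \<in> {0<..<1} \<and> fgam \<sigma> t = 2 * pi * of_int n)"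
  proof
    assume "\<exists>\<sigma>. \<sigma> \<in> {0<..<1} \<and> fgam \<sigma> t = 2 * pi * of_int n"
    then obtain s where s: "0 < s" "s < 1" "fgam s t = 2 * pi * of_int n" by auto
    have lo: "fgam 0 t < fgam s t" using fgam_mono[OF t, of 0 s] s by auto
    have hi: "fgam s t < fgam 1 t" using fgam_mono[OF t, of s 1] s by auto
    have b0: "- (pi/2) < fgam 0 t" and b1: "fgam 1 t < pi" using fgam0_bound[OF t] fgam1_bound[OF t] by auto
    have "n \<ge> 1 \<or> n \<le> -1" using n by linarith
    thus False
    proof
      assume "n \<ge> 1"
      hence "2*pi * of_int n \<ge> 2*pi * 1" using pi_gt_zero by (intro mult_left_mono) auto
      thus False using s(3) hi b1 pi_gt_zero by linarith
    next
      assume "n \<le> -1"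
      hence "2*pi * of_int n \<le> 2*pi * (-1)" using pi_gt_zero by (intro mult_left_mono) auto
      thus False using s(3) lo b0 pi_gt_zero by linarith
    qed
  qed
qed

end
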